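(* Let $f$ be a symmetric bounded probability density on $\mathbb{R}$. For $k=1,\dots,p$ let $\pi_k$ be a proper probability density on $\mathbb{R}$ and $\nu_k\in\{0,1\}$, and let $a_\sigma,b_\sigma>0$. Consider the model with fixed covariates $x_i\in\mathbb{R}^p$: $y_i\mid\beta,\sigma\sim\frac1\sigma f\big(\frac{y_i-x_i^t\beta}{\sigma}\big)$ independently for $i=1,\dots,n$; conditionally on $\sigma$, $\beta_k\sim\frac{1}{\sigma^{\nu_k}}\pi_k\big(\frac{\beta_k}{\sigma^{\nu_k}}\big)$ independently for $k=1,\dots,p$; and $\sigma$ has density $2\sigma\,{\rm IG}(\sigma^2\mid a_\sigma,b_\sigma)$. If $d\le n$, then $E[\sigma^d\mid\mathcal{D}]<\infty$, where $\mathcal{D}=\{y_1,\dots,y_n\}$.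
   Context: ${\rm IG}(\cdot\mid a,b)$ denotes the inverse-gamma density with shape $a$ and scale $b$; $E[\cdot\mid\mathcal{D}]$ is the posterior expectation. *)

theory Defs
  imports "HOL-Analysis.Analysis"
begin

definition is_density :: "(real \<Rightarrow> real) \<Rightarrow> bool" where
  "is_density g \<longleftrightarrow> g \<in> borel_measurable borel \<and> (\<forall>x. 0 \<le> g x)
     \<and> (\<integral>\<^sup>+ x. ennreal (g x) \<partial>lborel) = 1"

definition IG_density :: "real \<Rightarrow> real \<Rightarrow> real \<Rightarrow> real" where
  "IG_density a b x = (if 0 < x then b powr a / Gamma a * x powr (- a - 1) * exp (- b / x) else 0)"

definition sigma_prior :: "real \<Rightarrow> real \<Rightarrow> real \<Rightarrow> real" where
  "sigma_prior a b s = (if 0 < s then 2 * s * IG_density a b (s\<^sup>2) else 0)"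

definition joint_density ::
  "(real \<Rightarrow> real) \<Rightarrow> ('p::finite \<Rightarrow> real \<Rightarrow> real) \<Rightarrow> ('p \<Rightarrow> nat) \<Rightarrow> real \<Rightarrow> real
   \<Rightarrow> nat \<Rightarrow> (nat \<Rightarrow> real ^ 'p) \<Rightarrow> (nat \<Rightarrow> real) \<Rightarrow> real ^ 'p \<Rightarrow> real \<Rightarrow> real" where
  "joint_density f \<pi> \<nu> a b n x y \<beta> s =
     (\<Prod>i<n. (1 / s) * f ((y i - x i \<bullet> \<beta>) / s))
     * (\<Prod>k\<in>UNIV. (1 / s ^ \<nu> k) * \<pi> k ((\<beta> $ k) / s ^ \<nu> k))
     * sigma_prior a b s"

definition post_expect_sigma_pow ::
  "real \<Rightarrow> (real \<Rightarrow> real) \<Rightarrow> ('p::finite \<Rightarrow> real \<Rightarrow> real) \<Rightarrow> ('p \<Rightarrow> nat) \<Rightarrow> real \<Rightarrow> real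
   \<Rightarrow> nat \<Rightarrow> (nat \<Rightarrow> real ^ 'p) \<Rightarrow> (nat \<Rightarrow> real) \<Rightarrow> ennreal" where
  "post_expect_sigma_pow d f \<pi> \<nu> a b n x y =
     (\<integral>\<^sup>+ s. \<integral>\<^sup>+ \<beta>. ennreal (s powr d * joint_density f \<pi> \<nu> a b n x y \<beta> s) \<partial>lborel \<partial>lborel)
     / (\<integral>\<^sup>+ s. \<integral>\<^sup>+ \<beta>. ennreal (joint_density f \<pi> \<nu> a b n x y \<beta> s) \<partial>lborel \<partial>lborel)"

end

theory Submission
  imports Defs
begin

lemma Basis_vec_eq: "(Basis :: (real^'p::finite) set) = range (\<lambda>k. axis k 1)"
  by (auto simp: Basis_vec_def)

lemma nn_integral_vec_prod:
  fixes g :: "'p::finite \<Rightarrow> real \<Rightarrow> real"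
  assumes meas: "\<And>k. g k \<in> borel_measurable borel" and nn: "\<And>k t. 0 \<le> g k t"
  shows "(\<integral>\<^sup>+\<beta>. ennreal (\<Prod>k\<in>UNIV. g k (\<beta> $ k)) \<partial>(lborel :: (real^'p) measure))
       = (\<Prod>k\<in>UNIV. \<integral>\<^sup>+t. ennreal (g k t) \<partial>lborel)"
proof -
  define G where "G b t = ennreal (g (axis_index b) t)" for b :: "real^'p" and t
  have inj: "inj (\<lambda>k::'p. axis k (1::real))"
    by (auto simp: inj_def axis_eq_axis)
  have "(\<integral>\<^sup>+\<beta>. (\<Prod>b\<in>Basis. G b (\<beta> \<bullet> b)) \<partial>(lborel :: (real^'p) measure)) = (\<Prod>b\<in>Basis. (\<integral>\<^sup>+x. G b x \<partial>lborel))"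
    by (rule nn_integral_lborel_prod) (auto simp: G_def intro!: measurable_compose[OF meas])
  moreover have "\<And>\<beta>::real^'p. (\<Prod>b\<in>Basis. G b (\<beta> \<bullet> b)) = ennreal (\<Prod>k\<in>UNIV. g k (\<beta> $ k))"
    unfolding Basis_vec_eq
    by (subst prod.reindex[OF inj]) (simp add: G_def inner_axis prod_ennreal nn)
  moreover have "(\<Prod>b\<in>Basis. (\<integral>\<^sup>+x. G b x \<partial>lborel)) = (\<Prod>k\<in>UNIV. \<integral>\<^sup>+t. ennreal (g k t) \<partial>lborel)"
    unfolding Basis_vec_eq
    by (subst prod.reindex[OF inj]) (simp add: G_def[abs_def])
  ultimately show ?thesis by simp
qed

lemma scaled_density_int:
  assumes "is_density g" "0 < c"
  shows "(\<integral>\<^sup>+t. ennreal ((1/c) * g (t / c)) \<partial>lborel) = 1"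
proof -
  have [measurable]: "g \<in> borel_measurable borel" using assms(1) by (simp add: is_density_def)
  have "(\<integral>\<^sup>+t. ennreal ((1/c) * g (t / c)) \<partial>lborel) = \<bar>c\<bar> * (\<integral>\<^sup>+t. ennreal ((1/c) * g ((0 + c * t) / c)) \<partial>lborel)"
    by (rule nn_integral_real_affine) (use assms in auto)
  also have "\<dots> = c * (\<integral>\<^sup>+t. ennreal (1/c) * ennreal (g t) \<partial>lborel)"
    using assms by (intro arg_cong2[where f="(*)"] nn_integral_cong) (auto simp: ennreal_mult'[symmetric] is_density_def)
  also have "\<dots> = ennreal c * ennreal (1/c) * (\<integral>\<^sup>+t. ennreal (g t) \<partial>lborel)"
    by (subst nn_integral_cmult) (auto simp: mult.assoc)
  also have "\<dots> = 1" using assms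
    by (simp add: is_density_def flip: ennreal_mult)
  finally show ?thesis .
qed

lemma exp_powr_lower:
  fixes x c :: real
  assumes "0 < c" "0 \<le> x"
  shows "(x / c) powr c \<le> exp x"
proof -
  have "x / c \<le> exp (x / c)" using exp_ge_add_one_self[of "x/c"] by linarith
  then have "(x / c) powr c \<le> exp (x / c) powr c"
    using assms by (intro powr_mono2) auto
  also have "\<dots> = exp x" using assms by (simp add: powr_def)
  finally show ?thesis .
qed

lemma pow_exp_bound:
  fixes q b s :: real
  assumes q: "q < 0" and b: "0 < b" and s: "0 < s"
  shows "s powr q * exp (- b / s\<^sup>2) \<le> ((- q / 2) / b) powr (- q / 2)"
proof -
  define c where "c = - q / 2"
  have c: "0 < c" using q by (simp add: c_def)
  define t where "t = 1 / s\<^sup>2"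
  have t: "0 < t" using s by (simp add: t_def)
  have "t = s powr (-2)" using s by (simp add: t_def powr_minus powr_numeral divide_inverse)
  then have sq: "s powr q = t powr c"
    by (simp add: powr_powr c_def)
  have "((b / c) * t) powr c \<le> exp (b * t)" using exp_powr_lower[OF c, of "b*t"] b t by (simp add: mult.commute)
  then have P: "(b / c) powr c * t powr c \<le> exp (b * t)"
    using b c t powr_mult[of "b/c" t c] by simp
  define P where "P = (b / c) powr c"
  have Ppos: "0 < P" using b c by (simp add: P_def)
  have inv: "(c / b) powr c = 1 / P" using b c by (simp add: P_def powr_divide)
  have "t powr c * exp (- (b * t)) \<le> 1 / P"
    using P Ppos unfolding P_def[symmetric] by (simp add: exp_minus field_simps)
  moreover have "- b / s\<^sup>2 = - (b * t)" by (simp add: t_def)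
  ultimately have "s powr q * exp (- b / s\<^sup>2) \<le> (c / b) powr c" by (simp add: sq inv)
  then show ?thesis by (simp add: c_def)
qed

lemma tail_finite:
  fixes q b :: real
  assumes q: "q < -1" and b: "0 < b"
  shows "(\<integral>\<^sup>+s. ennreal (if 0 < s then s powr q * exp (- b / s\<^sup>2) else 0) \<partial>lborel) < \<infinity>"
proof -
  define K where "K = ((- q / 2) / b) powr (- q / 2)"
  have pt: "ennreal (if 0 < s then s powr q * exp (- b / s\<^sup>2) else 0)
      \<le> ennreal K * indicator {0..1} s + ennreal (s powr q) * indicator {1..} s" for s
  proof (cases "0 < s")
    case True
    show ?thesis
    proof (cases "s \<le> 1")
      case True2: True
      have "s powr q * exp (- b / s\<^sup>2) \<le> K" unfolding K_def
        using pow_exp_bound[of q b s] q b \<open>0<s\<close> by linarith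
      then have "ennreal (s powr q * exp (- b / s\<^sup>2)) \<le> ennreal K * indicator {0..1} s"
        using True True2 by (simp add: indicator_def ennreal_leI)
      also have "\<dots> \<le> ennreal K * indicator {0..1} s + ennreal (s powr q) * indicator {1..} s"
        by (rule add_increasing2) auto
      finally show ?thesis using True by simp
    next
      case False
      have "exp (- b / s\<^sup>2) \<le> 1" using b by simp
      then have "s powr q * exp (- b / s\<^sup>2) \<le> s powr q"
        by (simp add: mult_left_le)
      then show ?thesis using True False by (simp add: indicator_def ennreal_leI)
    qed
  next
    case False
    then show ?thesis by simp
  qed
  have "(\<integral>\<^sup>+s. ennreal (if 0 < s then s powr q * exp (- b / s\<^sup>2) else 0) \<partial>lborel)
     \<le> (\<integral>\<^sup>+s. ennreal K * indicator {0..1} s + ennreal (s powr q) * indicator {1..} s \<partial>lborel)"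
    by (rule nn_integral_mono) (rule pt)
  also have "\<dots> = (\<integral>\<^sup>+(s::real). ennreal K * indicator {0..1} s \<partial>lborel) + (\<integral>\<^sup>+s. ennreal (s powr q) * indicator {1..} s \<partial>lborel)"
    by (rule nn_integral_add) auto
  also have "(\<integral>\<^sup>+s. ennreal (s powr q) * indicator {1..} s \<partial>lborel) = ennreal (-(1 powr (q+1)) / (q+1))"
    by (rule nn_integral_has_integral_lebesgue') (use has_integral_powr_to_inf[OF q, of 1] in auto)
  also have "(\<integral>\<^sup>+(s::real). ennreal K * indicator {0..1} s \<partial>lborel) = ennreal K"
    by (subst nn_integral_cmult_indicator) auto
  finally show ?thesis by (simp add: order_le_less_trans)
qed


lemma vec_nth_meas[measurable]: "(\<lambda>\<beta>::real^'p::finite. \<beta> $ k) \<in> borel_measurable borel"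
  by (intro borel_measurable_continuous_onI continuous_intros)

lemma sigma_prior_meas[measurable]: "sigma_prior a b \<in> borel_measurable borel"
  unfolding sigma_prior_def[abs_def] IG_density_def by measurable

lemma test: fixes \<nu> :: "'p::finite \<Rightarrow> nat" 
  assumes [measurable]: "f \<in> borel_measurable borel" "\<And>k. \<pi> k \<in> borel_measurable borel"
  shows "(\<lambda>(s, \<beta>). ennreal (joint_density f \<pi> \<nu> a b n x y \<beta> s)) \<in> borel_measurable ((borel::real measure) \<Otimes>\<^sub>M (borel :: (real^'p) measure))"
  unfolding joint_density_def by measurable

theorem propositionS2:
  fixes f :: "real \<Rightarrow> real"
    and \<pi> :: "'p::finite \<Rightarrow> real \<Rightarrow> real"
    and \<nu> :: "'p \<Rightarrow> nat"
    and a\<^sub>\<sigma> b\<^sub>\<sigma> d :: real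
    and n :: nat
    and x :: "nat \<Rightarrow> real ^ 'p"
    and y :: "nat \<Rightarrow> real"
  assumes f_dens: "is_density f"
    and f_sym: "\<forall>t. f (- t) = f t"
    and f_bdd: "\<exists>M. \<forall>t. f t \<le> M"
    and \<pi>_dens: "\<forall>k. is_density (\<pi> k)"
    and \<nu>_01: "\<forall>k. \<nu> k \<in> {0, 1}"
    and a_pos: "0 < a\<^sub>\<sigma>" and b_pos: "0 < b\<^sub>\<sigma>"
    and d_le: "d \<le> real n"
  shows "post_expect_sigma_pow d f \<pi> \<nu> a\<^sub>\<sigma> b\<^sub>\<sigma> n x y < \<infinity>"
proof -
  obtain M where M: "\<And>t. f t \<le> M" using f_bdd by blast
  have f_meas[measurable]: "f \<in> borel_measurable borel" and f_nn: "\<And>t. 0 \<le> f t"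
    using f_dens by (auto simp: is_density_def)
  have \<pi>_meas[measurable]: "\<And>k. \<pi> k \<in> borel_measurable borel" and \<pi>_nn: "\<And>k t. 0 \<le> \<pi> k t"
    using \<pi>_dens by (auto simp: is_density_def)
  have M0: "0 \<le> M" using M[of 0] f_nn[of 0] by linarith
  define J where "J \<beta> s = joint_density f \<pi> \<nu> a\<^sub>\<sigma> b\<^sub>\<sigma> n x y \<beta> s" for \<beta> s
  define Pr where "Pr s \<beta> = (\<Prod>k\<in>UNIV. (1 / s ^ \<nu> k) * \<pi> k ((\<beta> $ k) / s ^ \<nu> k))" for s and \<beta> :: "real^'p"
  define e where "e = d - real n"
  define h where "h s = M ^ n * s powr e * sigma_prior a\<^sub>\<sigma> b\<^sub>\<sigma> s" for s
  define N where "N = (\<integral>\<^sup>+ s. \<integral>\<^sup>+ \<beta>. ennreal (s powr d * J \<beta> s) \<partial>lborel \<partial>lborel)"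
  define D where "D = (\<integral>\<^sup>+ s. \<integral>\<^sup>+ \<beta>. ennreal (J \<beta> s) \<partial>lborel \<partial>lborel)"
  have Pr_int: "(\<integral>\<^sup>+\<beta>. ennreal (Pr s \<beta>) \<partial>lborel) = 1" if s: "0 < s" for s
  proof -
    have "(\<integral>\<^sup>+\<beta>. ennreal (Pr s \<beta>) \<partial>lborel) = (\<Prod>k\<in>UNIV. \<integral>\<^sup>+t. ennreal ((1 / s ^ \<nu> k) * \<pi> k (t / s ^ \<nu> k)) \<partial>lborel)"
      unfolding Pr_def
      by (rule nn_integral_vec_prod[where g="\<lambda>k t. (1 / s ^ \<nu> k) * \<pi> k (t / s ^ \<nu> k)"])
         (use s \<pi>_nn in auto)
    also have "\<dots> = 1"
      using scaled_density_int \<pi>_dens s by simp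
    finally show ?thesis .
  qed
  have SP0: "sigma_prior a\<^sub>\<sigma> b\<^sub>\<sigma> s = 0" if "\<not> 0 < s" for s
    using that by (simp add: sigma_prior_def)
  have SPnn: "0 \<le> sigma_prior a\<^sub>\<sigma> b\<^sub>\<sigma> s" for s
    using a_pos b_pos by (simp add: sigma_prior_def IG_density_def Gamma_real_pos)
  have Pr_nn: "0 \<le> Pr s \<beta>" if "0 < s" for s \<beta>
    unfolding Pr_def using that \<pi>_nn by (intro prod_nonneg) auto
  have J_eq: "J \<beta> s = (\<Prod>i<n. (1 / s) * f ((y i - x i \<bullet> \<beta>) / s)) * Pr s \<beta> * sigma_prior a\<^sub>\<sigma> b\<^sub>\<sigma> s" for \<beta> s
    by (simp add: J_def joint_density_def Pr_def)
  have pt: "s powr d * J \<beta> s \<le> h s * Pr s \<beta>" if s: "0 < s" for s \<beta>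
  proof -
    have L: "(\<Prod>i<n. (1 / s) * f ((y i - x i \<bullet> \<beta>) / s)) \<le> (\<Prod>i<n. M / s)"
      using s f_nn M by (intro prod_mono) (auto simp: divide_right_mono)
    have pw: "s powr d * (\<Prod>i<n. M / s) = M ^ n * s powr e"
    proof -
      have "s powr d * (\<Prod>i<n. M / s) = M ^ n * (s powr d / s ^ n)"
        by (simp add: power_divide)
      also have "s powr d / s ^ n = s powr e"
        using s by (simp add: e_def powr_diff powr_realpow)
      finally show ?thesis .
    qed
    have "s powr d * J \<beta> s = (s powr d * (\<Prod>i<n. (1 / s) * f ((y i - x i \<bullet> \<beta>) / s))) * (Pr s \<beta> * sigma_prior a\<^sub>\<sigma> b\<^sub>\<sigma> s)"
      by (simp add: J_eq mult_ac)
    also have "\<dots> \<le> (s powr d * (\<Prod>i<n. M / s)) * (Pr s \<beta> * sigma_prior a\<^sub>\<sigma> b\<^sub>\<sigma> s)"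
      using L s Pr_nn[OF s] SPnn by (intro mult_right_mono mult_left_mono) auto
    also have "\<dots> = h s * Pr s \<beta>"
      by (simp only: pw h_def) (simp add: mult_ac)
    finally show ?thesis .
  qed
  have Pr_meas[measurable]: "(\<lambda>\<beta>. Pr s \<beta>) \<in> borel_measurable lborel" for s
    unfolding Pr_def by measurable
  have inner: "(\<integral>\<^sup>+ \<beta>. ennreal (s powr d * J \<beta> s) \<partial>lborel) \<le> ennreal (h s)" for s
  proof (cases "0 < s")
    case True
    have "(\<integral>\<^sup>+ \<beta>. ennreal (s powr d * J \<beta> s) \<partial>lborel) \<le> (\<integral>\<^sup>+ \<beta>. ennreal (h s) * ennreal (Pr s \<beta>) \<partial>lborel)"
    proof (rule nn_integral_mono)
      fix \<beta> :: "real^'p"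
      have hnn: "0 \<le> h s" using M0 SPnn by (simp add: h_def)
      have "ennreal (s powr d * J \<beta> s) \<le> ennreal (h s * Pr s \<beta>)"
        using pt[OF True] by (rule ennreal_leI)
      then show "ennreal (s powr d * J \<beta> s) \<le> ennreal (h s) * ennreal (Pr s \<beta>)"
        using hnn Pr_nn[OF True] by (simp add: ennreal_mult)
    qed
    also have "\<dots> = ennreal (h s) * (\<integral>\<^sup>+ \<beta>. ennreal (Pr s \<beta>) \<partial>lborel)"
      by (rule nn_integral_cmult) measurable
    also have "\<dots> = ennreal (h s)" using Pr_int[OF True] by simp
    finally show ?thesis .
  next
    case False
    then show ?thesis by (simp add: J_eq SP0)
  qed
  define q where "q = e - 2 * a\<^sub>\<sigma> - 1"
  define C where "C = M ^ n * 2 * (b\<^sub>\<sigma> powr a\<^sub>\<sigma> / Gamma a\<^sub>\<sigma>)"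
  have C0: "0 \<le> C" using M0 a_pos by (simp add: C_def Gamma_real_pos)
  have q: "q < -1" using d_le a_pos by (simp add: q_def e_def)
  have h_eq: "h s = C * (if 0 < s then s powr q * exp (- b\<^sub>\<sigma> / s\<^sup>2) else 0)" for s
  proof (cases "0 < s")
    case True
    have sq: "(s\<^sup>2) powr (- a\<^sub>\<sigma> - 1) = s powr (- 2 * a\<^sub>\<sigma> - 2)"
      using True by (simp add: powr_powr flip: powr_numeral)
    have "s powr e * s * s powr (- 2 * a\<^sub>\<sigma> - 2) = s powr q"
    proof -
      have "s powr e * s * s powr (- 2 * a\<^sub>\<sigma> - 2) = s powr e * s powr 1 * s powr (- 2 * a\<^sub>\<sigma> - 2)"
        using True by simp
      also have "\<dots> = s powr (e + 1 + (- 2 * a\<^sub>\<sigma> - 2))" by (simp only: powr_add)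
      also have "e + 1 + (- 2 * a\<^sub>\<sigma> - 2) = q" by (simp add: q_def)
      finally show ?thesis .
    qed
    then show ?thesis using True
      by (simp add: h_def C_def sigma_prior_def IG_density_def sq mult_ac)
  next
    case False
    then show ?thesis by (simp add: h_def SP0)
  qed
  have "N \<le> (\<integral>\<^sup>+ s. ennreal (h s) \<partial>lborel)"
    unfolding N_def by (rule nn_integral_mono) (rule inner)
  also have "\<dots> = (\<integral>\<^sup>+ s. ennreal C * ennreal (if 0 < s then s powr q * exp (- b\<^sub>\<sigma> / s\<^sup>2) else 0) \<partial>lborel)"
    using C0 by (intro nn_integral_cong) (simp add: h_eq ennreal_mult)
  also have "\<dots> = ennreal C * (\<integral>\<^sup>+ s. ennreal (if 0 < s then s powr q * exp (- b\<^sub>\<sigma> / s\<^sup>2) else 0) \<partial>lborel)"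
    by (rule nn_integral_cmult) measurable
  also have "\<dots> < \<infinity>"
    using tail_finite[OF q b_pos] by (simp add: ennreal_mult_less_top)
  finally have N_fin: "N < \<infinity>" .
  have J_meas: "(\<lambda>(s, \<beta>). ennreal (J \<beta> s)) \<in> borel_measurable ((lborel::real measure) \<Otimes>\<^sub>M (lborel :: (real^'p) measure))"
    using test[OF f_meas \<pi>_meas, where \<nu>=\<nu> and a=a\<^sub>\<sigma> and b=b\<^sub>\<sigma> and n=n and x=x and y=y]
    by (subst measurable_cong_sets[OF sets_pair_measure_cong[OF sets_lborel sets_lborel] refl]) (simp add: J_def)
  have D0: "N = 0" if "D = 0"
  proof -
    have Imeas: "(\<lambda>s. \<integral>\<^sup>+ \<beta>. ennreal (J \<beta> s) \<partial>lborel) \<in> borel_measurable (lborel::real measure)"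
      by (rule lborel.borel_measurable_nn_integral) (use J_meas in simp)
    have "AE s in lborel. (\<integral>\<^sup>+ \<beta>. ennreal (J \<beta> s) \<partial>lborel) = 0"
      using that Imeas unfolding D_def by (simp add: nn_integral_0_iff_AE)
    then have "AE s in lborel. (\<integral>\<^sup>+ \<beta>. ennreal (s powr d * J \<beta> s) \<partial>lborel) = 0"
    proof (rule eventually_mono)
      fix s assume s0: "(\<integral>\<^sup>+ \<beta>. ennreal (J \<beta> s) \<partial>lborel) = 0"
      have "(\<lambda>\<beta>. ennreal (J \<beta> s)) \<in> borel_measurable (lborel :: (real^'p) measure)"
        unfolding J_def joint_density_def by measurable
      then have "AE \<beta> in lborel. ennreal (J \<beta> s) = 0"
        using s0 by (simp add: nn_integral_0_iff_AE)
      then have "AE \<beta> in lborel. ennreal (s powr d * J \<beta> s) = 0"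
      proof (rule eventually_mono)
        fix \<beta> assume "ennreal (J \<beta> s) = 0"
        then have "J \<beta> s \<le> 0" by (simp add: ennreal_eq_0_iff)
        then have "s powr d * J \<beta> s \<le> 0" by (simp add: mult_nonneg_nonpos)
        then show "ennreal (s powr d * J \<beta> s) = 0" by (simp add: ennreal_eq_0_iff)
      qed
      then show "(\<integral>\<^sup>+ \<beta>. ennreal (s powr d * J \<beta> s) \<partial>lborel) = 0"
        by (simp add: nn_integral_cong_AE)
    qed
    then show "N = 0" unfolding N_def by (simp add: nn_integral_cong_AE)
  qed
  have "N / D < \<infinity>"
  proof (cases "D = 0")
    case True
    then show ?thesis using D0 by simp
  next
    case False
    then have "N / D \<noteq> top" using N_fin by (auto simp add: ennreal_divide_eq_top_iff)
    then show ?thesis by (simp add: less_top)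
  qed
  then show ?thesis unfolding post_expect_sigma_pow_def N_def D_def J_def .
qed

end
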